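(* Let $R$ be a ring and $\Psi:R\to R$ a ring endomorphism. Then $R$ is NJ-symmetric if and only if the skew formal power series ring $R[[x,\Psi]]$ is NJ-symmetric.
   Context: Rings are associative with identity. $R[[x,\Psi]]$ consists of formal power series $\sum_{i\ge 0} r_i x^i$ with $r_i\in R$, with multiplication determined by $xr=\Psi(r)x$ for $r\in R$. $N(S)$ is the set of nilpotent elements, $J(S)$ the Jacobson radical of a ring $S$. $S$ is NJ-symmetric if for all $a,b,c\in S$, $abc\in N(S)$ implies $bac\in J(S)$. *)

theory Defs
  imports "HOL-Algebra.Ideal" "HOL-Algebra.RingHom"
begin

definition left_ideal :: "('a, 'b) ring_scheme \<Rightarrow> 'a set \<Rightarrow> bool" where
  "left_ideal S I \<longleftrightarrow> additive_subgroup I S \<and>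
     (\<forall>r \<in> carrier S. \<forall>a \<in> I. r \<otimes>\<^bsub>S\<^esub> a \<in> I)"

definition maximal_left_ideal :: "('a, 'b) ring_scheme \<Rightarrow> 'a set \<Rightarrow> bool" where
  "maximal_left_ideal S M \<longleftrightarrow> left_ideal S M \<and> M \<noteq> carrier S \<and>
     (\<forall>L. left_ideal S L \<and> M \<subseteq> L \<longrightarrow> L = M \<or> L = carrier S)"

definition jacobson_radical :: "('a, 'b) ring_scheme \<Rightarrow> 'a set" where
  "jacobson_radical S = carrier S \<inter> \<Inter> {M. maximal_left_ideal S M}"

definition nilpotent_elems :: "('a, 'b) ring_scheme \<Rightarrow> 'a set" where
  "nilpotent_elems S = {a \<in> carrier S. \<exists>n::nat. a [^]\<^bsub>S\<^esub> n = \<zero>\<^bsub>S\<^esub>}"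

definition NJ_symmetric :: "('a, 'b) ring_scheme \<Rightarrow> bool" where
  "NJ_symmetric S \<longleftrightarrow> (\<forall>a \<in> carrier S. \<forall>b \<in> carrier S. \<forall>c \<in> carrier S.
     a \<otimes>\<^bsub>S\<^esub> b \<otimes>\<^bsub>S\<^esub> c \<in> nilpotent_elems S \<longrightarrow>
     b \<otimes>\<^bsub>S\<^esub> a \<otimes>\<^bsub>S\<^esub> c \<in> jacobson_radical S)"

text \<open>The skew formal power series ring R[[x,Psi]]: a series sum f_i x^i is the
  coefficient function f; multiplication is determined by x r = Psi(r) x, so
  (f g)_n = sum_{i+j=n} f_i Psi^i(g_j).\<close>

definition skew_fps_ring :: "('a, 'b) ring_scheme \<Rightarrow> ('a \<Rightarrow> 'a) \<Rightarrow> (nat \<Rightarrow> 'a) ring" where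
  "skew_fps_ring R \<Psi> =
    \<lparr> carrier = {f. \<forall>n. f n \<in> carrier R},
      mult = (\<lambda>f g. \<lambda>n. \<Oplus>\<^bsub>R\<^esub> i \<in> {..n}. f i \<otimes>\<^bsub>R\<^esub> (\<Psi> ^^ i) (g (n - i))),
      one = (\<lambda>n. if n = 0 then \<one>\<^bsub>R\<^esub> else \<zero>\<^bsub>R\<^esub>),
      zero = (\<lambda>n. \<zero>\<^bsub>R\<^esub>),
      add = (\<lambda>f g. \<lambda>n. f n \<oplus>\<^bsub>R\<^esub> g n) \<rparr>"

end

theory Submission
  imports Defs "HOL-Algebra.UnivPoly"
begin

context ring
begin

lemma left_ideal_subset: "left_ideal R I \<Longrightarrow> I \<subseteq> carrier R"
  unfolding left_ideal_def by (intro additive_subgroup.a_subset) (elim conjE)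

lemma left_ideal_zero: "left_ideal R I \<Longrightarrow> \<zero> \<in> I"
  unfolding left_ideal_def by (intro additive_subgroup.zero_closed) (elim conjE)

lemma left_ideal_add: "left_ideal R I \<Longrightarrow> a \<in> I \<Longrightarrow> b \<in> I \<Longrightarrow> a \<oplus> b \<in> I"
  unfolding left_ideal_def by (elim conjE, intro additive_subgroup.a_closed)

lemma left_ideal_neg: "left_ideal R I \<Longrightarrow> a \<in> I \<Longrightarrow> \<ominus> a \<in> I"
  unfolding left_ideal_def by (elim conjE, intro additive_subgroup.a_inv_closed)

lemma left_ideal_mult: "left_ideal R I \<Longrightarrow> r \<in> carrier R \<Longrightarrow> a \<in> I \<Longrightarrow> r \<otimes> a \<in> I"
  unfolding left_ideal_def by simp

lemma left_idealI:
  assumes "I \<subseteq> carrier R" "\<zero> \<in> I" "\<And>a b. a \<in> I \<Longrightarrow> b \<in> I \<Longrightarrow> a \<oplus> b \<in> I"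
    "\<And>a. a \<in> I \<Longrightarrow> \<ominus> a \<in> I" "\<And>r a. r \<in> carrier R \<Longrightarrow> a \<in> I \<Longrightarrow> r \<otimes> a \<in> I"
  shows "left_ideal R I"
  unfolding left_ideal_def
proof (intro conjI ballI)
  show "additive_subgroup I R"
    by (intro additive_subgroupI subgroup.intro) (use assms in \<open>auto simp: a_inv_def\<close>)
qed (use assms in auto)

lemma left_ideal_one: "left_ideal R I \<Longrightarrow> \<one> \<in> I \<Longrightarrow> I = carrier R"
proof
  assume a: "left_ideal R I" "\<one> \<in> I"
  show "I \<subseteq> carrier R" using a(1) by (rule left_ideal_subset)
  show "carrier R \<subseteq> I"
  proof
    fix x assume "x \<in> carrier R"
    then have "x \<otimes> \<one> \<in> I" using a by (intro left_ideal_mult)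
    then show "x \<in> I" using \<open>x \<in> carrier R\<close> by simp
  qed
qed

lemma left_inv_aux:
  assumes u: "u \<in> carrier R" and m: "m \<in> carrier R" and q: "q \<in> carrier R"
    and mq: "m \<oplus> q = \<one>" and uq: "u = \<one> \<oplus> u \<otimes> q"
  shows "u \<otimes> m = \<one>"
proof -
  have "u \<otimes> m \<oplus> u \<otimes> q = u \<otimes> (m \<oplus> q)" using u m q by (simp add: r_distr)
  also have "\<dots> = \<one> \<oplus> u \<otimes> q" using u mq uq by simp
  finally show ?thesis using u m q by (simp add: add.right_cancel)
qed

end

context ring
begin

lemma span_left_ideal:
  assumes M: "left_ideal R M" and k: "k \<in> carrier R"
  shows "left_ideal R {m \<oplus> s \<otimes> k | m s. m \<in> M \<and> s \<in> carrier R}"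
proof -
  have Mc: "M \<subseteq> carrier R" using M by (rule left_ideal_subset)
  show ?thesis
  proof (rule left_idealI)
    show "{m \<oplus> s \<otimes> k | m s. m \<in> M \<and> s \<in> carrier R} \<subseteq> carrier R"
      using Mc k by auto
    show "\<zero> \<in> {m \<oplus> s \<otimes> k | m s. m \<in> M \<and> s \<in> carrier R}"
      by (rule CollectI, rule exI[of _ \<zero>], rule exI[of _ \<zero>]) (use k left_ideal_zero[OF M] in simp)
  next
    fix a b assume "a \<in> {m \<oplus> s \<otimes> k | m s. m \<in> M \<and> s \<in> carrier R}" "b \<in> {m \<oplus> s \<otimes> k | m s. m \<in> M \<and> s \<in> carrier R}"
    then obtain m1 s1 m2 s2 where a: "a = m1 \<oplus> s1 \<otimes> k" "m1 \<in> M" "s1 \<in> carrier R"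
      and b: "b = m2 \<oplus> s2 \<otimes> k" "m2 \<in> M" "s2 \<in> carrier R" by blast
    have "a \<oplus> b = (m1 \<oplus> m2) \<oplus> (s1 \<oplus> s2) \<otimes> k"
      using a b Mc k by (simp add: l_distr a_ac subsetD)
    moreover have "m1 \<oplus> m2 \<in> M" using a b M by (intro left_ideal_add)
    ultimately show "a \<oplus> b \<in> {m \<oplus> s \<otimes> k | m s. m \<in> M \<and> s \<in> carrier R}"
      using a b by blast
  next
    fix a assume "a \<in> {m \<oplus> s \<otimes> k | m s. m \<in> M \<and> s \<in> carrier R}"
    then obtain m1 s1 where a: "a = m1 \<oplus> s1 \<otimes> k" "m1 \<in> M" "s1 \<in> carrier R" by blast
    have "\<ominus> a = (\<ominus> m1) \<oplus> (\<ominus> s1) \<otimes> k"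
      using a Mc k by (simp add: minus_add l_minus subsetD)
    moreover have "\<ominus> m1 \<in> M" using a M by (intro left_ideal_neg)
    ultimately show "\<ominus> a \<in> {m \<oplus> s \<otimes> k | m s. m \<in> M \<and> s \<in> carrier R}"
      using a by blast
  next
    fix r a assume r: "r \<in> carrier R" and "a \<in> {m \<oplus> s \<otimes> k | m s. m \<in> M \<and> s \<in> carrier R}"
    then obtain m1 s1 where a: "a = m1 \<oplus> s1 \<otimes> k" "m1 \<in> M" "s1 \<in> carrier R" by blast
    have "r \<otimes> a = (r \<otimes> m1) \<oplus> (r \<otimes> s1) \<otimes> k"
      using a Mc k r by (simp add: r_distr m_assoc subsetD)
    moreover have "r \<otimes> m1 \<in> M" using a M r by (intro left_ideal_mult)
    ultimately show "r \<otimes> a \<in> {m \<oplus> s \<otimes> k | m s. m \<in> M \<and> s \<in> carrier R}"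
      using a r by blast
  qed
qed

lemma aux_cancel: "f \<in> carrier R \<Longrightarrow> m \<in> carrier R \<Longrightarrow> (f \<oplus> \<ominus> m) \<oplus> m = f"
  by (simp add: a_assoc l_neg)

lemma maximal_not_one: "maximal_left_ideal R M \<Longrightarrow> \<one> \<notin> M"
  unfolding maximal_left_ideal_def using left_ideal_one by blast

end

context ring_hom_ring
begin

lemma lideal_preimage:
  assumes L: "left_ideal S L"
  shows "left_ideal R {x \<in> carrier R. h x \<in> L}"
proof (rule R.left_idealI)
  show "\<zero> \<in> {x \<in> carrier R. h x \<in> L}" using S.left_ideal_zero[OF L] by simp
next
  fix a b assume "a \<in> {x \<in> carrier R. h x \<in> L}" "b \<in> {x \<in> carrier R. h x \<in> L}"
  then show "a \<oplus> b \<in> {x \<in> carrier R. h x \<in> L}" using S.left_ideal_add[OF L] by simp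
next
  fix a assume "a \<in> {x \<in> carrier R. h x \<in> L}"
  then show "\<ominus> a \<in> {x \<in> carrier R. h x \<in> L}" using S.left_ideal_neg[OF L] by simp
next
  fix r a assume "r \<in> carrier R" "a \<in> {x \<in> carrier R. h x \<in> L}"
  then show "r \<otimes> a \<in> {x \<in> carrier R. h x \<in> L}" using S.left_ideal_mult[OF L] by simp
qed auto

lemma lideal_image:
  assumes surj: "h ` carrier R = carrier S" and I: "left_ideal R I"
  shows "left_ideal S (h ` I)"
proof -
  have Ic: "I \<subseteq> carrier R" using I by (rule R.left_ideal_subset)
  show ?thesis
  proof (rule S.left_idealI)
    show "h ` I \<subseteq> carrier S" using Ic by auto
    show "\<zero>\<^bsub>S\<^esub> \<in> h ` I" using R.left_ideal_zero[OF I] hom_zero[symmetric] by blast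
  next
    fix a b assume "a \<in> h ` I" "b \<in> h ` I"
    then obtain x y where "x \<in> I" "y \<in> I" "a = h x" "b = h y" by blast
    moreover have "h (x \<oplus> y) = h x \<oplus>\<^bsub>S\<^esub> h y" using \<open>x \<in> I\<close> \<open>y \<in> I\<close> Ic by (intro hom_add) auto
    moreover have "x \<oplus> y \<in> I" using \<open>x \<in> I\<close> \<open>y \<in> I\<close> I by (intro R.left_ideal_add)
    ultimately show "a \<oplus>\<^bsub>S\<^esub> b \<in> h ` I" by (metis image_eqI)
  next
    fix a assume "a \<in> h ` I"
    then obtain x where "x \<in> I" "a = h x" by blast
    moreover have "h (\<ominus> x) = \<ominus>\<^bsub>S\<^esub> h x" using \<open>x \<in> I\<close> Ic by (intro hom_a_inv) auto
    moreover have "\<ominus> x \<in> I" using \<open>x \<in> I\<close> I by (intro R.left_ideal_neg)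
    ultimately show "\<ominus>\<^bsub>S\<^esub> a \<in> h ` I" by (metis image_eqI)
  next
    fix r a assume r: "r \<in> carrier S" and "a \<in> h ` I"
    then obtain x where "x \<in> I" "a = h x" by blast
    from r surj obtain r' where r': "r' \<in> carrier R" "r = h r'" by blast
    have "x \<in> carrier R" using \<open>x \<in> I\<close> Ic by auto
    then have "h (r' \<otimes> x) = r \<otimes>\<^bsub>S\<^esub> a" using r' \<open>a = h x\<close> by simp
    moreover have "r' \<otimes> x \<in> I" using \<open>x \<in> I\<close> I r' by (intro R.left_ideal_mult)
    ultimately show "r \<otimes>\<^bsub>S\<^esub> a \<in> h ` I" by (metis image_eqI)
  qed
qed

end

locale skew = R?: ring R for R (structure) + fixes \<Psi> :: "'a \<Rightarrow> 'a"
  assumes hom: "\<Psi> \<in> ring_hom R R"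
begin

abbreviation S where "S \<equiv> skew_fps_ring R \<Psi>"

lemma psi_hom: "(\<Psi> ^^ i) \<in> ring_hom R R"
proof (induction i)
  case 0 then show ?case by (auto intro!: ring_hom_memI)
next
  case (Suc i)
  show ?case using Suc hom
    by (auto intro!: ring_hom_memI simp: ring_hom_closed ring_hom_mult ring_hom_add ring_hom_one)
qed

lemma psi_closed[simp]: "x \<in> carrier R \<Longrightarrow> (\<Psi> ^^ i) x \<in> carrier R"
  by (rule ring_hom_closed[OF psi_hom])
lemma psi_mult[simp]: "x \<in> carrier R \<Longrightarrow> y \<in> carrier R \<Longrightarrow> (\<Psi> ^^ i) (x \<otimes> y) = (\<Psi> ^^ i) x \<otimes> (\<Psi> ^^ i) y"
  by (rule ring_hom_mult[OF psi_hom])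
lemma psi_add[simp]: "x \<in> carrier R \<Longrightarrow> y \<in> carrier R \<Longrightarrow> (\<Psi> ^^ i) (x \<oplus> y) = (\<Psi> ^^ i) x \<oplus> (\<Psi> ^^ i) y"
  by (rule ring_hom_add[OF psi_hom])
lemma psi_one[simp]: "(\<Psi> ^^ i) \<one> = \<one>"
  by (rule ring_hom_one[OF psi_hom])
lemma psi_zero[simp]: "(\<Psi> ^^ i) \<zero> = \<zero>"
  by (rule ring_hom_zero[OF psi_hom R.ring_axioms R.ring_axioms])
lemma Psi_zero: "\<Psi> \<zero> = \<zero>"
  by (rule ring_hom_zero[OF hom R.ring_axioms R.ring_axioms])
lemma psi_ring_hom_ring: "ring_hom_ring R R (\<Psi> ^^ i)"
  by (intro ring_hom_ring.intro ring_hom_ring_axioms.intro R.ring_axioms psi_hom)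
lemma psi_finsum: "f \<in> A \<rightarrow> carrier R \<Longrightarrow> (\<Psi> ^^ i) (finsum R f A) = (\<Oplus>k\<in>A. (\<Psi> ^^ i) (f k))"
  using ring_hom_ring.hom_finsum[OF psi_ring_hom_ring, of f A i] by (simp add: comp_def)
lemma psi_psi: "(\<Psi> ^^ i) ((\<Psi> ^^ k) x) = (\<Psi> ^^ (i + k)) x"
  by (simp add: funpow_add)

lemma S_carrier: "f \<in> carrier S \<longleftrightarrow> (\<forall>n. f n \<in> carrier R)"
  by (simp add: skew_fps_ring_def)
lemma S_mult: "(f \<otimes>\<^bsub>S\<^esub> g) n = (\<Oplus>i\<in>{..n}. f i \<otimes> (\<Psi> ^^ i) (g (n - i)))"
  by (simp add: skew_fps_ring_def)
lemma S_add: "(f \<oplus>\<^bsub>S\<^esub> g) n = f n \<oplus> g n"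
  by (simp add: skew_fps_ring_def)
lemma S_one: "\<one>\<^bsub>S\<^esub> n = (if n = 0 then \<one> else \<zero>)"
  by (simp add: skew_fps_ring_def)
lemma S_zero: "\<zero>\<^bsub>S\<^esub> n = \<zero>"
  by (simp add: skew_fps_ring_def)
lemma S_one': "\<one>\<^bsub>S\<^esub> = (\<lambda>n. if n = 0 then \<one> else \<zero>)"
  by (simp add: skew_fps_ring_def)
lemma S_zero': "\<zero>\<^bsub>S\<^esub> = (\<lambda>n. \<zero>)"
  by (simp add: skew_fps_ring_def)

lemma diag:
  assumes F: "\<And>i k. F i k \<in> carrier R"
  shows "(\<Oplus>j\<in>{..n::nat}. \<Oplus>i\<in>{..j}. F i (j - i)) = (\<Oplus>i\<in>{..n}. \<Oplus>k\<in>{..n - i}. F i k)"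
proof (induction n)
  case 0 then show ?case using F by (simp add: Pi_def)
next
  case (Suc n)
  have L: "(\<Oplus>j\<in>{..Suc n}. \<Oplus>i\<in>{..j}. F i (j - i)) =
     (\<Oplus>i\<in>{..Suc n}. F i (Suc n - i)) \<oplus> (\<Oplus>j\<in>{..n}. \<Oplus>i\<in>{..j}. F i (j - i))"
    by (rule finsum_Suc) (auto intro!: finsum_closed simp: F)
  have L2: "(\<Oplus>i\<in>{..Suc n}. F i (Suc n - i)) = F (Suc n) 0 \<oplus> (\<Oplus>i\<in>{..n}. F i (Suc n - i))"
    using finsum_Suc[of "\<lambda>i. F i (Suc n - i)" n] F by simp
  have "(\<Oplus>i\<in>{..Suc n}. \<Oplus>k\<in>{..Suc n - i}. F i k) =
     (\<Oplus>k\<in>{..0}. F (Suc n) k) \<oplus> (\<Oplus>i\<in>{..n}. \<Oplus>k\<in>{..Suc n - i}. F i k)"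
    using finsum_Suc[of "\<lambda>i. \<Oplus>k\<in>{..Suc n - i}. F i k" n] by (simp add: F Pi_def finsum_closed del: finsum_Suc)
  also have "(\<Oplus>k\<in>{..0}. F (Suc n) k) = F (Suc n) 0" using F by simp
  also have "(\<Oplus>i\<in>{..n}. \<Oplus>k\<in>{..Suc n - i}. F i k) = 
     (\<Oplus>i\<in>{..n}. F i (Suc n - i) \<oplus> (\<Oplus>k\<in>{..n - i}. F i k))"
  proof (rule finsum_cong')
    fix i assume "i \<in> {..n}"
    then have "Suc n - i = Suc (n - i)" by auto
    then show "(\<Oplus>k\<in>{..Suc n - i}. F i k) = F i (Suc n - i) \<oplus> (\<Oplus>k\<in>{..n - i}. F i k)"
      using finsum_Suc[of "F i" "n - i"] F by simp
  qed (auto intro!: finsum_closed simp: F)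
  also have "\<dots> = (\<Oplus>i\<in>{..n}. F i (Suc n - i)) \<oplus> (\<Oplus>i\<in>{..n}. \<Oplus>k\<in>{..n - i}. F i k)"
    by (rule finsum_addf) (auto intro!: finsum_closed simp: F)
  finally have RR: "(\<Oplus>i\<in>{..Suc n}. \<Oplus>k\<in>{..Suc n - i}. F i k) = F (Suc n) 0 \<oplus> ((\<Oplus>i\<in>{..n}. F i (Suc n - i)) \<oplus> (\<Oplus>i\<in>{..n}. \<Oplus>k\<in>{..n - i}. F i k))" .
  have c1: "(\<Oplus>i\<in>{..n}. F i (Suc n - i)) \<in> carrier R" by (intro finsum_closed) (auto simp: F)
  have c2: "(\<Oplus>i\<in>{..n}. \<Oplus>k\<in>{..n - i}. F i k) \<in> carrier R" by (intro finsum_closed) (auto intro!: finsum_closed simp: F)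
  show ?case unfolding L L2 RR Suc by (rule a_assoc) (use F c1 c2 in auto)
qed

lemma S_mult_closed: "f \<in> carrier S \<Longrightarrow> g \<in> carrier S \<Longrightarrow> f \<otimes>\<^bsub>S\<^esub> g \<in> carrier S"
  by (auto simp: S_carrier S_mult intro!: finsum_closed)

lemma S_assoc:
  assumes f: "f \<in> carrier S" and g: "g \<in> carrier S" and h: "h \<in> carrier S"
  shows "(f \<otimes>\<^bsub>S\<^esub> g) \<otimes>\<^bsub>S\<^esub> h = f \<otimes>\<^bsub>S\<^esub> (g \<otimes>\<^bsub>S\<^esub> h)"
proof
  fix n
  have fc: "f i \<in> carrier R" and gc: "g i \<in> carrier R" and hc: "h i \<in> carrier R" for i
    using f g h by (auto simp: S_carrier)
  define F where "F i k = f i \<otimes> (\<Psi> ^^ i) (g k) \<otimes> (\<Psi> ^^ (i + k)) (h (n - (i + k)))" for i k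
  have Fc: "F i k \<in> carrier R" for i k by (simp add: F_def fc gc hc)
  have "((f \<otimes>\<^bsub>S\<^esub> g) \<otimes>\<^bsub>S\<^esub> h) n = (\<Oplus>j\<in>{..n}. (\<Oplus>i\<in>{..j}. f i \<otimes> (\<Psi> ^^ i) (g (j - i))) \<otimes> (\<Psi> ^^ j) (h (n - j)))"
    by (simp add: S_mult)
  also have "\<dots> = (\<Oplus>j\<in>{..n}. \<Oplus>i\<in>{..j}. F i (j - i))"
  proof (rule finsum_cong')
    fix j assume "j \<in> {..n}"
    have "(\<Oplus>i\<in>{..j}. f i \<otimes> (\<Psi> ^^ i) (g (j - i))) \<otimes> (\<Psi> ^^ j) (h (n - j)) =
       (\<Oplus>i\<in>{..j}. f i \<otimes> (\<Psi> ^^ i) (g (j - i)) \<otimes> (\<Psi> ^^ j) (h (n - j)))"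
      by (rule finsum_ldistr) (auto simp: fc gc hc)
    also have "\<dots> = (\<Oplus>i\<in>{..j}. F i (j - i))"
      by (rule finsum_cong') (auto simp: F_def fc gc hc)
    finally show "(\<Oplus>i\<in>{..j}. f i \<otimes> (\<Psi> ^^ i) (g (j - i))) \<otimes> (\<Psi> ^^ j) (h (n - j)) = (\<Oplus>i\<in>{..j}. F i (j - i))" .
  qed (auto intro!: finsum_closed simp: Fc)
  also have "\<dots> = (\<Oplus>i\<in>{..n}. \<Oplus>k\<in>{..n - i}. F i k)"
    by (rule diag) (rule Fc)
  also have "\<dots> = (f \<otimes>\<^bsub>S\<^esub> (g \<otimes>\<^bsub>S\<^esub> h)) n"
    unfolding S_mult
  proof (rule finsum_cong')
    fix i assume "i \<in> {..n}"
    have "f i \<otimes> (\<Psi> ^^ i) (\<Oplus>k\<in>{..n - i}. g k \<otimes> (\<Psi> ^^ k) (h (n - i - k))) =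
       f i \<otimes> (\<Oplus>k\<in>{..n - i}. (\<Psi> ^^ i) (g k \<otimes> (\<Psi> ^^ k) (h (n - i - k))))"
      by (subst psi_finsum) (auto simp: fc gc hc)
    also have "\<dots> = (\<Oplus>k\<in>{..n - i}. f i \<otimes> (\<Psi> ^^ i) (g k \<otimes> (\<Psi> ^^ k) (h (n - i - k))))"
      by (rule finsum_rdistr) (auto simp: fc gc hc)
    also have "\<dots> = (\<Oplus>k\<in>{..n - i}. F i k)"
      by (rule finsum_cong') (auto simp: F_def fc gc hc psi_psi m_assoc diff_diff_left)
    finally show "(\<Oplus>k\<in>{..n - i}. F i k) = f i \<otimes> (\<Psi> ^^ i) (\<Oplus>k\<in>{..n - i}. g k \<otimes> (\<Psi> ^^ k) (h (n - i - k)))" by simp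
  qed (auto intro!: finsum_closed m_closed psi_closed simp: Fc fc gc hc)
  finally show "((f \<otimes>\<^bsub>S\<^esub> g) \<otimes>\<^bsub>S\<^esub> h) n = (f \<otimes>\<^bsub>S\<^esub> (g \<otimes>\<^bsub>S\<^esub> h)) n" .
qed

lemma S_l_one: "f \<in> carrier S \<Longrightarrow> \<one>\<^bsub>S\<^esub> \<otimes>\<^bsub>S\<^esub> f = f"
proof
  fix n assume f: "f \<in> carrier S"
  then have fc: "f i \<in> carrier R" for i by (auto simp: S_carrier)
  have "(\<one>\<^bsub>S\<^esub> \<otimes>\<^bsub>S\<^esub> f) n = (\<Oplus>j\<in>{..n}. if 0 = j then f (n - j) else \<zero>)"
    unfolding S_mult S_one by (rule finsum_cong') (auto simp: fc)
  also have "\<dots> = f (n - 0)" by (rule finsum_singleton) (auto simp: fc)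
  finally show "(\<one>\<^bsub>S\<^esub> \<otimes>\<^bsub>S\<^esub> f) n = f n" by simp
qed

lemma S_r_one: "f \<in> carrier S \<Longrightarrow> f \<otimes>\<^bsub>S\<^esub> \<one>\<^bsub>S\<^esub> = f"
proof
  fix n assume f: "f \<in> carrier S"
  then have fc: "f i \<in> carrier R" for i by (auto simp: S_carrier)
  have "(f \<otimes>\<^bsub>S\<^esub> \<one>\<^bsub>S\<^esub>) n = (\<Oplus>j\<in>{..n}. if n = j then f j else \<zero>)"
    unfolding S_mult S_one by (rule finsum_cong') (auto simp: fc)
  also have "\<dots> = f n" by (rule finsum_singleton) (auto simp: fc)
  finally show "(f \<otimes>\<^bsub>S\<^esub> \<one>\<^bsub>S\<^esub>) n = f n" by simp
qed

lemma S_one_closed: "\<one>\<^bsub>S\<^esub> \<in> carrier S"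
  by (simp add: S_carrier S_one)
lemma S_zero_closed: "\<zero>\<^bsub>S\<^esub> \<in> carrier S"
  by (simp add: S_carrier S_zero)
lemma S_add_closed: "f \<in> carrier S \<Longrightarrow> g \<in> carrier S \<Longrightarrow> f \<oplus>\<^bsub>S\<^esub> g \<in> carrier S"
  by (simp add: S_carrier S_add)

lemma S_monoid: "monoid S"
  by (rule monoidI) (auto simp: S_mult_closed S_one_closed S_assoc S_l_one S_r_one)

lemma S_abelian_group: "abelian_group S"
proof (rule abelian_groupI)
  fix x y z assume "x \<in> carrier S" "y \<in> carrier S" "z \<in> carrier S"
  then show "x \<oplus>\<^bsub>S\<^esub> y \<oplus>\<^bsub>S\<^esub> z = x \<oplus>\<^bsub>S\<^esub> (y \<oplus>\<^bsub>S\<^esub> z)"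
    by (auto simp: S_carrier S_add a_assoc)
next
  fix x y assume "x \<in> carrier S" "y \<in> carrier S"
  then show "x \<oplus>\<^bsub>S\<^esub> y = y \<oplus>\<^bsub>S\<^esub> x"
    by (auto simp: S_carrier S_add a_comm)
next
  fix x assume "x \<in> carrier S"
  then show "\<zero>\<^bsub>S\<^esub> \<oplus>\<^bsub>S\<^esub> x = x"
    by (auto simp: S_carrier S_add S_zero)
next
  fix x assume x: "x \<in> carrier S"
  show "\<exists>y\<in>carrier S. y \<oplus>\<^bsub>S\<^esub> x = \<zero>\<^bsub>S\<^esub>"
    by (rule bexI[of _ "\<lambda>n. \<ominus> x n"]) (use x in \<open>auto simp: S_carrier S_add S_zero l_neg\<close>)
qed (auto simp: S_add_closed S_zero_closed)

lemma S_ring: "ring S"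
proof (rule ringI[OF S_abelian_group S_monoid])
  fix x y z assume x: "x \<in> carrier S" and y: "y \<in> carrier S" and z: "z \<in> carrier S"
  then have c: "x i \<in> carrier R" "y i \<in> carrier R" "z i \<in> carrier R" for i by (auto simp: S_carrier)
  show "(x \<oplus>\<^bsub>S\<^esub> y) \<otimes>\<^bsub>S\<^esub> z = x \<otimes>\<^bsub>S\<^esub> z \<oplus>\<^bsub>S\<^esub> y \<otimes>\<^bsub>S\<^esub> z"
  proof
    fix n
    have "((x \<oplus>\<^bsub>S\<^esub> y) \<otimes>\<^bsub>S\<^esub> z) n = (\<Oplus>i\<in>{..n}. x i \<otimes> (\<Psi> ^^ i) (z (n - i)) \<oplus> y i \<otimes> (\<Psi> ^^ i) (z (n - i)))"
      unfolding S_mult S_add by (rule finsum_cong') (auto simp: c l_distr)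
    also have "\<dots> = (x \<otimes>\<^bsub>S\<^esub> z \<oplus>\<^bsub>S\<^esub> y \<otimes>\<^bsub>S\<^esub> z) n"
      unfolding S_mult S_add by (rule finsum_addf) (auto simp: c)
    finally show "((x \<oplus>\<^bsub>S\<^esub> y) \<otimes>\<^bsub>S\<^esub> z) n = (x \<otimes>\<^bsub>S\<^esub> z \<oplus>\<^bsub>S\<^esub> y \<otimes>\<^bsub>S\<^esub> z) n" .
  qed
  show "z \<otimes>\<^bsub>S\<^esub> (x \<oplus>\<^bsub>S\<^esub> y) = z \<otimes>\<^bsub>S\<^esub> x \<oplus>\<^bsub>S\<^esub> z \<otimes>\<^bsub>S\<^esub> y"
  proof
    fix n
    have "(z \<otimes>\<^bsub>S\<^esub> (x \<oplus>\<^bsub>S\<^esub> y)) n = (\<Oplus>i\<in>{..n}. z i \<otimes> (\<Psi> ^^ i) (x (n - i)) \<oplus> z i \<otimes> (\<Psi> ^^ i) (y (n - i)))"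
      unfolding S_mult S_add by (rule finsum_cong') (auto simp: c r_distr)
    also have "\<dots> = (z \<otimes>\<^bsub>S\<^esub> x \<oplus>\<^bsub>S\<^esub> z \<otimes>\<^bsub>S\<^esub> y) n"
      unfolding S_mult S_add by (rule finsum_addf) (auto simp: c)
    finally show "(z \<otimes>\<^bsub>S\<^esub> (x \<oplus>\<^bsub>S\<^esub> y)) n = (z \<otimes>\<^bsub>S\<^esub> x \<oplus>\<^bsub>S\<^esub> z \<otimes>\<^bsub>S\<^esub> y) n" .
  qed
qed

definition pi :: "(nat \<Rightarrow> 'a) \<Rightarrow> 'a" where "pi f = f 0"
definition iota :: "'a \<Rightarrow> nat \<Rightarrow> 'a" where "iota a = (\<lambda>n. if n = 0 then a else \<zero>)"

lemma pi_hom: "pi \<in> ring_hom S R"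
proof (rule ring_hom_memI)
  fix x y assume x: "x \<in> carrier S" and y: "y \<in> carrier S"
  then have c: "x i \<in> carrier R" "y i \<in> carrier R" for i by (auto simp: S_carrier)
  show "pi (x \<otimes>\<^bsub>S\<^esub> y) = pi x \<otimes> pi y"
    unfolding pi_def S_mult using c by simp
  show "pi (x \<oplus>\<^bsub>S\<^esub> y) = pi x \<oplus> pi y" unfolding pi_def S_add by simp
qed (auto simp: pi_def S_carrier S_one)

lemma pi_rhr: "ring_hom_ring S R pi"
  by (intro ring_hom_ring.intro ring_hom_ring_axioms.intro R.ring_axioms S_ring pi_hom)

lemma iota_closed: "a \<in> carrier R \<Longrightarrow> iota a \<in> carrier S"
  by (simp add: iota_def S_carrier)

lemma pi_iota: "pi (iota a) = a"
  by (simp add: pi_def iota_def)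

lemma iota_hom: "iota \<in> ring_hom R S"
proof (rule ring_hom_memI)
  fix a b assume a: "a \<in> carrier R" and b: "b \<in> carrier R"
  show "iota (a \<otimes> b) = iota a \<otimes>\<^bsub>S\<^esub> iota b"
  proof
    fix n
    have "(iota a \<otimes>\<^bsub>S\<^esub> iota b) n = (\<Oplus>j\<in>{..n}. if 0 = j then a \<otimes> iota b n else \<zero>)"
      unfolding S_mult by (rule finsum_cong') (auto simp: iota_def a b)
    also have "\<dots> = a \<otimes> iota b n" by (rule finsum_singleton) (auto simp: iota_def a b)
    finally show "iota (a \<otimes> b) n = (iota a \<otimes>\<^bsub>S\<^esub> iota b) n" by (simp add: iota_def a b)
  qed
  show "iota (a \<oplus> b) = iota a \<oplus>\<^bsub>S\<^esub> iota b"
    by (rule ext) (simp add: iota_def S_add a b)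
qed (auto simp: iota_def S_one' S_carrier)

lemma iota_rhr: "ring_hom_ring R S iota"
  by (intro ring_hom_ring.intro ring_hom_ring_axioms.intro R.ring_axioms S_ring iota_hom)

primrec V :: "(nat \<Rightarrow> 'a) \<Rightarrow> nat \<Rightarrow> nat \<Rightarrow> 'a" where
  "V q 0 = (\<lambda>_. \<one>)"
| "V q (Suc n) = (V q n)(Suc n := (\<Oplus>i\<in>{..n}. V q n i \<otimes> (\<Psi> ^^ i) (q (Suc n - i))))"

lemma V_stable: "i \<le> n \<Longrightarrow> V q (n + d) i = V q n i"
  by (induction d) auto

lemma V_stable': "i \<le> n \<Longrightarrow> V q n i = V q i i"
  using V_stable[of i i q "n - i"] by simp

lemma V_closed:
  assumes q: "q \<in> carrier S" shows "V q n i \<in> carrier R"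
proof (induction n arbitrary: i)
  case 0 then show ?case by simp
next
  case (Suc n)
  have "(\<Oplus>j\<in>{..n}. V q n j \<otimes> (\<Psi> ^^ j) (q (Suc n - j))) \<in> carrier R"
    using Suc q by (intro finsum_closed) (auto simp: S_carrier)
  then show ?case using Suc by simp
qed

definition U :: "(nat \<Rightarrow> 'a) \<Rightarrow> nat \<Rightarrow> 'a" where "U q n = V q n n"

lemma U_closed: "q \<in> carrier S \<Longrightarrow> U q n \<in> carrier R"
  unfolding U_def by (rule V_closed)

lemma U_0: "U q 0 = \<one>" by (simp add: U_def)
lemma U_Suc:
  assumes q: "q \<in> carrier S"
  shows "U q (Suc n) = (\<Oplus>i\<in>{..n}. U q i \<otimes> (\<Psi> ^^ i) (q (Suc n - i)))"
proof -
  have "U q (Suc n) = (\<Oplus>i\<in>{..n}. V q n i \<otimes> (\<Psi> ^^ i) (q (Suc n - i)))"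
    by (simp add: U_def)
  also have "\<dots> = (\<Oplus>i\<in>{..n}. U q i \<otimes> (\<Psi> ^^ i) (q (Suc n - i)))"
  proof (rule finsum_cong')
    fix i assume "i \<in> {..n}"
    then have "V q n i = U q i" unfolding U_def by (intro V_stable') simp
    then show "V q n i \<otimes> (\<Psi> ^^ i) (q (Suc n - i)) = U q i \<otimes> (\<Psi> ^^ i) (q (Suc n - i))"
      by simp
  qed (use q in \<open>auto simp: U_closed S_carrier\<close>)
  finally show ?thesis .
qed

lemma U_eq:
  assumes q: "q \<in> carrier S" and q0: "q 0 = \<zero>"
  shows "U q = \<one>\<^bsub>S\<^esub> \<oplus>\<^bsub>S\<^esub> (U q \<otimes>\<^bsub>S\<^esub> q)"
proof
  fix n
  have qc: "q i \<in> carrier R" for i using q by (auto simp: S_carrier)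
  have Uc: "U q i \<in> carrier R" for i using q by (rule U_closed)
  show "U q n = (\<one>\<^bsub>S\<^esub> \<oplus>\<^bsub>S\<^esub> (U q \<otimes>\<^bsub>S\<^esub> q)) n"
  proof (cases n)
    case 0 then show ?thesis by (simp add: S_add S_one S_mult q0 U_0 Uc)
  next
    case (Suc m)
    have "(U q \<otimes>\<^bsub>S\<^esub> q) (Suc m) = U q (Suc m) \<otimes> (\<Psi> ^^ Suc m) (q 0) \<oplus> (\<Oplus>i\<in>{..m}. U q i \<otimes> (\<Psi> ^^ i) (q (Suc m - i)))"
      unfolding S_mult using finsum_Suc[of "\<lambda>i. U q i \<otimes> (\<Psi> ^^ i) (q (Suc m - i))" m]
      by (simp add: Uc qc Pi_def Psi_zero del: finsum_Suc)
    also have "\<dots> = U q (Suc m)" by (simp add: q0 Uc U_Suc[OF q, symmetric] Psi_zero)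
    finally show ?thesis using Suc by (simp add: S_add S_one Uc)
  qed
qed

lemma left_inv_exists:
  assumes m: "m \<in> carrier S" and q: "q \<in> carrier S" and q0: "q 0 = \<zero>"
    and mq: "m \<oplus>\<^bsub>S\<^esub> q = \<one>\<^bsub>S\<^esub>"
  shows "\<exists>u\<in>carrier S. u \<otimes>\<^bsub>S\<^esub> m = \<one>\<^bsub>S\<^esub>"
proof
  show "U q \<in> carrier S" using U_closed[OF q] by (simp add: S_carrier)
  then show "U q \<otimes>\<^bsub>S\<^esub> m = \<one>\<^bsub>S\<^esub>"
    using ring.left_inv_aux[OF S_ring _ m q mq U_eq[OF q q0]] by simp
qed

lemma pi_surj: "pi ` carrier S = carrier R"
proof
  show "pi ` carrier S \<subseteq> carrier R" using ring_hom_closed[OF pi_hom] by blast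
  show "carrier R \<subseteq> pi ` carrier S"
  proof
    fix a assume "a \<in> carrier R"
    then show "a \<in> pi ` carrier S" using iota_closed pi_iota by (metis image_eqI)
  qed
qed

lemma pi_mult: "f \<in> carrier S \<Longrightarrow> g \<in> carrier S \<Longrightarrow> pi (f \<otimes>\<^bsub>S\<^esub> g) = pi f \<otimes> pi g"
  by (rule ring_hom_mult[OF pi_hom])

lemma pi_a_inv: "f \<in> carrier S \<Longrightarrow> pi (\<ominus>\<^bsub>S\<^esub> f) = \<ominus> pi f"
proof -
  assume f: "f \<in> carrier S"
  interpret P: ring_hom_ring S R pi by (rule pi_rhr)
  show ?thesis using f by (rule P.hom_a_inv)
qed

lemma pi_add: "f \<in> carrier S \<Longrightarrow> g \<in> carrier S \<Longrightarrow> pi (f \<oplus>\<^bsub>S\<^esub> g) = pi f \<oplus> pi g"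
  by (rule ring_hom_add[OF pi_hom])

lemma S_a_inv_closed: "f \<in> carrier S \<Longrightarrow> \<ominus>\<^bsub>S\<^esub> f \<in> carrier S"
  by (rule ring.ring_simprules(3)[OF S_ring])

lemma max_contains_kernel:
  assumes M: "maximal_left_ideal S M" and k: "k \<in> carrier S" and k0: "pi k = \<zero>"
  shows "k \<in> M"
proof (rule ccontr)
  assume kM: "k \<notin> M"
  have Ml: "left_ideal S M" and Mne: "M \<noteq> carrier S"
    and Mmax: "\<And>L. left_ideal S L \<Longrightarrow> M \<subseteq> L \<Longrightarrow> L = M \<or> L = carrier S"
    using M unfolding maximal_left_ideal_def by blast+
  have Mc: "M \<subseteq> carrier S" using ring.left_ideal_subset[OF S_ring Ml] .
  let ?L = "{m \<oplus>\<^bsub>S\<^esub> s \<otimes>\<^bsub>S\<^esub> k | m s. m \<in> M \<and> s \<in> carrier S}"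
  have Ll: "left_ideal S ?L" by (rule ring.span_left_ideal[OF S_ring Ml k])
  have "M \<subseteq> ?L"
  proof
    fix m assume m: "m \<in> M"
    then have "m = m \<oplus>\<^bsub>S\<^esub> \<zero>\<^bsub>S\<^esub> \<otimes>\<^bsub>S\<^esub> k"
      using Mc k ring.ring_simprules(15)[OF S_ring] ring.ring_simprules(24)[OF S_ring] by (metis subsetD)
    then show "m \<in> ?L" using m S_zero_closed by blast
  qed
  moreover have "k \<in> ?L"
  proof -
    have "k = \<zero>\<^bsub>S\<^esub> \<oplus>\<^bsub>S\<^esub> \<one>\<^bsub>S\<^esub> \<otimes>\<^bsub>S\<^esub> k"
      using k by (simp add: ring.ring_simprules(8)[OF S_ring] S_l_one)
    then show ?thesis using ring.left_ideal_zero[OF S_ring Ml] S_one_closed by blast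
  qed
  ultimately have "?L = carrier S" using Mmax[OF Ll] kM by blast
  then have "\<one>\<^bsub>S\<^esub> \<in> ?L" using S_one_closed by simp
  then obtain m s where m: "m \<in> M" and s: "s \<in> carrier S" and eq: "\<one>\<^bsub>S\<^esub> = m \<oplus>\<^bsub>S\<^esub> s \<otimes>\<^bsub>S\<^esub> k" by blast
  have q: "s \<otimes>\<^bsub>S\<^esub> k \<in> carrier S" using s k by (rule S_mult_closed)
  have q0: "(s \<otimes>\<^bsub>S\<^esub> k) 0 = \<zero>"
    using pi_mult[OF s k] k0 s by (simp add: pi_def S_carrier)
  obtain u where u: "u \<in> carrier S" "u \<otimes>\<^bsub>S\<^esub> m = \<one>\<^bsub>S\<^esub>"
    using left_inv_exists[OF _ q q0 eq[symmetric]] m Mc by blast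
  have "u \<otimes>\<^bsub>S\<^esub> m \<in> M" using ring.left_ideal_mult[OF S_ring Ml u(1) m] .
  then have "\<one>\<^bsub>S\<^esub> \<in> M" using u by simp
  then have "M = carrier S" using ring.left_ideal_one[OF S_ring Ml] by simp
  with Mne show False by simp
qed

lemma max_pre:
  assumes M: "maximal_left_ideal R M"
  shows "maximal_left_ideal S {f \<in> carrier S. pi f \<in> M}"
proof -
  let ?P = "{f \<in> carrier S. pi f \<in> M}"
  have Ml: "left_ideal R M" and Mne: "M \<noteq> carrier R"
    and Mmax: "\<And>L. left_ideal R L \<Longrightarrow> M \<subseteq> L \<Longrightarrow> L = M \<or> L = carrier R"
    using M unfolding maximal_left_ideal_def by blast+
  have Mc: "M \<subseteq> carrier R" by (rule left_ideal_subset[OF Ml])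
  have Pl: "left_ideal S ?P" by (rule ring_hom_ring.lideal_preimage[OF pi_rhr Ml])
  have one_notin: "\<one> \<notin> M" by (rule maximal_not_one[OF M])
  have "?P \<noteq> carrier S"
  proof
    assume "?P = carrier S"
    then have "pi \<one>\<^bsub>S\<^esub> \<in> M" using S_one_closed by blast
    then show False using one_notin ring_hom_one[OF pi_hom] by simp
  qed
  moreover have "L = ?P \<or> L = carrier S" if L: "left_ideal S L" and PL: "?P \<subseteq> L" for L
  proof -
    have Lc: "L \<subseteq> carrier S" by (rule ring.left_ideal_subset[OF S_ring L])
    have Il: "left_ideal R (pi ` L)" by (rule ring_hom_ring.lideal_image[OF pi_rhr pi_surj L])
    have "M \<subseteq> pi ` L"
    proof
      fix a assume a: "a \<in> M"
      then have "iota a \<in> ?P" using Mc iota_closed pi_iota by auto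
      then show "a \<in> pi ` L" using PL pi_iota by (metis image_eqI subsetD)
    qed
    then have "pi ` L = M \<or> pi ` L = carrier R" using Mmax[OF Il] by blast
    then show ?thesis
    proof
      assume "pi ` L = M"
      then have "L \<subseteq> ?P" using Lc by auto
      then show ?thesis using PL by blast
    next
      assume "pi ` L = carrier R"
      then obtain f where f: "f \<in> L" "pi f = \<one>" by (metis one_closed imageE)
      have fc: "f \<in> carrier S" using f Lc by auto
      let ?g = "\<one>\<^bsub>S\<^esub> \<oplus>\<^bsub>S\<^esub> \<ominus>\<^bsub>S\<^esub> f"
      have gc: "?g \<in> carrier S" using fc S_one_closed by (simp add: S_add_closed S_a_inv_closed)
      have "pi ?g = \<one> \<oplus> \<ominus> \<one>"
        using fc S_one_closed f(2) by (simp add: pi_add pi_a_inv S_a_inv_closed ring_hom_one[OF pi_hom])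
      then have "pi ?g = \<zero>" by (simp add: r_neg)
      then have "?g \<in> ?P" using gc left_ideal_zero[OF Ml] by simp
      then have "?g \<in> L" using PL by blast
      then have "?g \<oplus>\<^bsub>S\<^esub> f \<in> L" using f(1) by (rule ring.left_ideal_add[OF S_ring L])
      moreover have "?g \<oplus>\<^bsub>S\<^esub> f = \<one>\<^bsub>S\<^esub>" by (rule ring.aux_cancel[OF S_ring S_one_closed fc])
      ultimately have "\<one>\<^bsub>S\<^esub> \<in> L" by simp
      then show ?thesis using ring.left_ideal_one[OF S_ring L] by blast
    qed
  qed
  ultimately show ?thesis unfolding maximal_left_ideal_def using Pl by blast
qed

lemma max_img:
  assumes M: "maximal_left_ideal S M"
  shows "M = {f \<in> carrier S. pi f \<in> pi ` M}" and "maximal_left_ideal R (pi ` M)"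
proof -
  have Ml: "left_ideal S M" and Mne: "M \<noteq> carrier S"
    and Mmax: "\<And>L. left_ideal S L \<Longrightarrow> M \<subseteq> L \<Longrightarrow> L = M \<or> L = carrier S"
    using M unfolding maximal_left_ideal_def by blast+
  have Mc: "M \<subseteq> carrier S" by (rule ring.left_ideal_subset[OF S_ring Ml])
  show Meq: "M = {f \<in> carrier S. pi f \<in> pi ` M}"
  proof
    show "M \<subseteq> {f \<in> carrier S. pi f \<in> pi ` M}" using Mc by auto
    show "{f \<in> carrier S. pi f \<in> pi ` M} \<subseteq> M"
    proof
      fix f assume "f \<in> {f \<in> carrier S. pi f \<in> pi ` M}"
      then obtain m where f: "f \<in> carrier S" and m: "m \<in> M" and fm: "pi f = pi m" by auto
      have mc: "m \<in> carrier S" using m Mc by auto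
      let ?g = "f \<oplus>\<^bsub>S\<^esub> \<ominus>\<^bsub>S\<^esub> m"
      have gc: "?g \<in> carrier S" using f mc by (simp add: S_add_closed S_a_inv_closed)
      have "pi ?g = pi f \<oplus> \<ominus> pi m"
        using f mc by (simp add: pi_add pi_a_inv S_a_inv_closed)
      then have "pi ?g = \<zero>" using fm mc ring_hom_closed[OF pi_hom] by (simp add: r_neg)
      then have "?g \<in> M" by (rule max_contains_kernel[OF M gc])
      then have "?g \<oplus>\<^bsub>S\<^esub> m \<in> M" using m by (rule ring.left_ideal_add[OF S_ring Ml])
      then show "f \<in> M" using ring.aux_cancel[OF S_ring f mc] by simp
    qed
  qed
  have Il: "left_ideal R (pi ` M)" by (rule ring_hom_ring.lideal_image[OF pi_rhr pi_surj Ml])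
  have "pi ` M \<noteq> carrier R"
  proof
    assume "pi ` M = carrier R"
    then have "pi \<one>\<^bsub>S\<^esub> \<in> pi ` M" using ring_hom_one[OF pi_hom] by simp
    then have "\<one>\<^bsub>S\<^esub> \<in> M" using S_one_closed Meq by blast
    then show False using ring.left_ideal_one[OF S_ring Ml] Mne by simp
  qed
  moreover have "L = pi ` M \<or> L = carrier R" if L: "left_ideal R L" and hML: "pi ` M \<subseteq> L" for L
  proof -
    let ?P = "{f \<in> carrier S. pi f \<in> L}"
    have Lc: "L \<subseteq> carrier R" by (rule left_ideal_subset[OF L])
    have Pl: "left_ideal S ?P" by (rule ring_hom_ring.lideal_preimage[OF pi_rhr L])
    have "M \<subseteq> ?P" using Mc hML by auto
    then have P: "?P = M \<or> ?P = carrier S" using Mmax[OF Pl] by blast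
    have "L = pi ` ?P"
    proof
      show "pi ` ?P \<subseteq> L" by auto
      show "L \<subseteq> pi ` ?P"
      proof
        fix a assume "a \<in> L"
        then have "iota a \<in> ?P" using Lc iota_closed pi_iota by auto
        then show "a \<in> pi ` ?P" using pi_iota by (metis image_eqI)
      qed
    qed
    then show ?thesis using P pi_surj by auto
  qed
  ultimately show "maximal_left_ideal R (pi ` M)" unfolding maximal_left_ideal_def using Il by blast
qed

lemma jac_iff:
  assumes f: "f \<in> carrier S"
  shows "f \<in> jacobson_radical S \<longleftrightarrow> pi f \<in> jacobson_radical R"
proof
  assume fj: "f \<in> jacobson_radical S"
  have "pi f \<in> M" if M: "maximal_left_ideal R M" for M
  proof -
    have "f \<in> {f \<in> carrier S. pi f \<in> M}" using fj max_pre[OF M] unfolding jacobson_radical_def by blast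
    then show ?thesis by simp
  qed
  moreover have "pi f \<in> carrier R" using f ring_hom_closed[OF pi_hom] by blast
  ultimately show "pi f \<in> jacobson_radical R" unfolding jacobson_radical_def by blast
next
  assume fj: "pi f \<in> jacobson_radical R"
  have "f \<in> M" if M: "maximal_left_ideal S M" for M
  proof -
    have "pi f \<in> pi ` M" using fj max_img(2)[OF M] unfolding jacobson_radical_def by blast
    then show ?thesis using max_img(1)[OF M] f by blast
  qed
  then show "f \<in> jacobson_radical S" using f unfolding jacobson_radical_def by blast
qed

lemma nil_pi: "f \<in> nilpotent_elems S \<Longrightarrow> pi f \<in> nilpotent_elems R"
proof -
  assume "f \<in> nilpotent_elems S"
  then obtain n where f: "f \<in> carrier S" and fn: "f [^]\<^bsub>S\<^esub> (n::nat) = \<zero>\<^bsub>S\<^esub>"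
    unfolding nilpotent_elems_def by blast
  have "pi f [^] n = pi (f [^]\<^bsub>S\<^esub> n)" using ring_hom_ring.hom_nat_pow[OF pi_rhr f] by simp
  also have "\<dots> = \<zero>" using fn by (simp add: pi_def S_zero)
  finally show ?thesis unfolding nilpotent_elems_def using f ring_hom_closed[OF pi_hom] by blast
qed

lemma nil_iota: "a \<in> nilpotent_elems R \<Longrightarrow> iota a \<in> nilpotent_elems S"
proof -
  assume "a \<in> nilpotent_elems R"
  then obtain n where a: "a \<in> carrier R" and an: "a [^] (n::nat) = \<zero>"
    unfolding nilpotent_elems_def by blast
  have "iota a [^]\<^bsub>S\<^esub> n = iota (a [^] n)" using ring_hom_ring.hom_nat_pow[OF iota_rhr a] by simp
  also have "\<dots> = \<zero>\<^bsub>S\<^esub>" using an by (simp add: iota_def S_zero')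
  finally show ?thesis unfolding nilpotent_elems_def using a iota_closed by blast
qed

lemma main: "NJ_symmetric R \<longleftrightarrow> NJ_symmetric S"
proof
  assume NJ: "NJ_symmetric R"
  show "NJ_symmetric S" unfolding NJ_symmetric_def
  proof (intro ballI impI)
    fix f g h assume f: "f \<in> carrier S" and g: "g \<in> carrier S" and h: "h \<in> carrier S"
      and nil: "f \<otimes>\<^bsub>S\<^esub> g \<otimes>\<^bsub>S\<^esub> h \<in> nilpotent_elems S"
    have pc: "pi f \<in> carrier R" "pi g \<in> carrier R" "pi h \<in> carrier R"
      using f g h ring_hom_closed[OF pi_hom] by blast+
    have "pi (f \<otimes>\<^bsub>S\<^esub> g \<otimes>\<^bsub>S\<^esub> h) = pi f \<otimes> pi g \<otimes> pi h"
      using f g h by (simp add: pi_mult S_mult_closed)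
    then have "pi f \<otimes> pi g \<otimes> pi h \<in> nilpotent_elems R" using nil_pi[OF nil] by simp
    then have "pi g \<otimes> pi f \<otimes> pi h \<in> jacobson_radical R" using NJ pc unfolding NJ_symmetric_def by blast
    moreover have "pi (g \<otimes>\<^bsub>S\<^esub> f \<otimes>\<^bsub>S\<^esub> h) = pi g \<otimes> pi f \<otimes> pi h"
      using f g h by (simp add: pi_mult S_mult_closed)
    ultimately show "g \<otimes>\<^bsub>S\<^esub> f \<otimes>\<^bsub>S\<^esub> h \<in> jacobson_radical S"
      using jac_iff f g h S_mult_closed by simp
  qed
next
  assume NJ: "NJ_symmetric S"
  show "NJ_symmetric R" unfolding NJ_symmetric_def
  proof (intro ballI impI)
    fix a b c assume a: "a \<in> carrier R" and b: "b \<in> carrier R" and c: "c \<in> carrier R"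
      and nil: "a \<otimes> b \<otimes> c \<in> nilpotent_elems R"
    have ic: "iota a \<in> carrier S" "iota b \<in> carrier S" "iota c \<in> carrier S"
      using a b c iota_closed by blast+
    have "iota (a \<otimes> b \<otimes> c) = iota a \<otimes>\<^bsub>S\<^esub> iota b \<otimes>\<^bsub>S\<^esub> iota c"
      using a b c by (simp add: ring_hom_mult[OF iota_hom])
    then have "iota a \<otimes>\<^bsub>S\<^esub> iota b \<otimes>\<^bsub>S\<^esub> iota c \<in> nilpotent_elems S" using nil_iota[OF nil] by simp
    then have J: "iota b \<otimes>\<^bsub>S\<^esub> iota a \<otimes>\<^bsub>S\<^esub> iota c \<in> jacobson_radical S"
      using NJ ic unfolding NJ_symmetric_def by blast
    have "iota b \<otimes>\<^bsub>S\<^esub> iota a \<otimes>\<^bsub>S\<^esub> iota c = iota (b \<otimes> a \<otimes> c)"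
      using a b c by (simp add: ring_hom_mult[OF iota_hom])
    then have "iota (b \<otimes> a \<otimes> c) \<in> jacobson_radical S" using J by simp
    then have "pi (iota (b \<otimes> a \<otimes> c)) \<in> jacobson_radical R"
      using jac_iff iota_closed a b c by simp
    then show "b \<otimes> a \<otimes> c \<in> jacobson_radical R" by (simp add: pi_iota)
  qed
qed

end

theorem corollary2p27:
  fixes R :: "('a, 'b) ring_scheme" and \<Psi> :: "'a \<Rightarrow> 'a"
  assumes "ring R" and "\<Psi> \<in> ring_hom R R"
  shows "NJ_symmetric R \<longleftrightarrow> NJ_symmetric (skew_fps_ring R \<Psi>)"
proof -
  interpret skew R \<Psi> by (intro skew.intro skew_axioms.intro assms)
  show ?thesis by (rule main)
qed

end
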